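(* Let $x,y$ be non-commuting indeterminates and $C=xyx^{-1}y^{-1}$. Let $(R_n)_{n\in\mathbb Z}$ be the solution of $$R_{n+1}CR_{n-1}=R_n^2+1\qquad(n\in\mathbb Z)$$ with $R_0=yxy^{-1}$ and $R_1=y$. Then the element $$K_n:=R_{n+1}^{-1}R_n+R_{n+1}^{-1}R_n^{-1}+R_{n+1}R_n^{-1}$$ is independent of $n\in\mathbb Z$.
   Context: Work in the free skew field (non-commutative rational functions) over $\mathbb C$ generated by $x,y$. *)

theory Defs
  imports Main
begin

definition commC :: "'a::division_ring \<Rightarrow> 'a \<Rightarrow> 'a" where
  "commC x y = x * y * inverse x * inverse y"

definition Kinv :: "(int \<Rightarrow> 'a::division_ring) \<Rightarrow> int \<Rightarrow> 'a" where
  "Kinv R n = inverse (R (n+1)) * R n + inverse (R (n+1)) * inverse (R n)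
             + R (n+1) * inverse (R n)"

end

theory Submission
  imports Defs
begin

lemma cancel1[simp]: "(b::'a::division_ring) \<noteq> 0 \<Longrightarrow> b * (inverse b * z) = z"
  by (simp add: mult.assoc[symmetric])
lemma cancel2[simp]: "(b::'a::division_ring) \<noteq> 0 \<Longrightarrow> inverse b * (b * z) = z"
  by (simp add: mult.assoc[symmetric])

lemma fwd:
  fixes a b c D C :: "'a::division_ring"
  assumes "D \<noteq> 0" "c * D = b*b+1" "b * D = a * b" and that: "D = C * a"
  shows "c * C * b = b * c"
proof -
  have "b * c * D = b * (b*b+1)" using assms by (simp add: mult.assoc)
  also have "\<dots> = (b*b+1)*b" by (simp add: algebra_simps)
  also have "\<dots> = c * C * b * D"
    using assms that by (metis mult.assoc)
  finally have "b * c * D = c * C * b * D" .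
  with assms(1) show ?thesis by simp
qed

lemma bwd:
  fixes a b c C :: "'a::division_ring"
  assumes "c * C \<noteq> 0" "c * C * a = b*b+1" "c * C * b = b * c"
  shows "b * C * a = a * b"
proof -
  have "(c * C) * (b * C * a) = b * (c * C * a)" using assms(3)
    by (metis mult.assoc)
  also have "\<dots> = (b*b+1)*b" using assms(2) by (simp add: algebra_simps)
  also have "\<dots> = (c*C) * (a * b)" using assms(2) by (metis mult.assoc)
  finally show ?thesis using assms(1) by simp
qed

lemma kstep:
  fixes a b c D :: "'a::division_ring"
  assumes nz: "a \<noteq> 0" "b \<noteq> 0" "c \<noteq> 0" "D \<noteq> 0"
    and r: "c * D = b*b+1" and s: "b * D = a * b"
  shows "inverse c * b + inverse c * inverse b + c * inverse b
       = inverse b * a + inverse b * inverse a + b * inverse a"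
proof -
  have D: "D = inverse b * a * b" using s nz
    by (metis left_inverse mult.assoc mult_1_left)
  have ci: "inverse c * (b*b+1) = D" using r nz
    by (metis left_inverse mult.assoc mult_1_left)
  have cc: "c = (b*b+1) * inverse D" using r nz
    by (metis mult.assoc right_inverse mult_1_right)
  have iD: "inverse D = inverse b * inverse a * b"
    using D nz by (simp add: nonzero_inverse_mult_distrib mult.assoc)
  have "(inverse c * b + inverse c * inverse b + c * inverse b) * b
      = inverse c * (b*b+1) + c" using nz
    by (simp add: algebra_simps)
  also have "\<dots> = inverse b * a * b + (b*b+1) * (inverse b * inverse a * b)"
    using ci cc D iD by simp
  also have "\<dots> = (inverse b * a + inverse b * inverse a + b * inverse a) * b"
    using nz by (simp add: algebra_simps)
  finally show ?thesis using nz by simp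
qed

theorem lemma3p1:
  fixes x y :: "'a::{division_ring, ring_char_0}" and R :: "int \<Rightarrow> 'a"
  assumes "x \<noteq> 0" and "y \<noteq> 0"
    and "\<forall>n. R n \<noteq> 0"
    and "\<forall>n. R (n+1) * commC x y * R (n-1) = R n ^ 2 + 1"
    and "R 0 = y * x * inverse y" and "R 1 = y"
  shows "\<forall>n m. Kinv R n = Kinv R m"
proof -
  define C where "C = commC x y"
  have Cnz: "C \<noteq> 0" using assms(1,2) by (simp add: C_def commC_def)
  have nz: "\<And>n. R n \<noteq> 0" using assms(3) by blast
  have rec: "\<And>n. R (n+1) * C * R (n-1) = R n * R n + 1"
    using assms(4) by (simp add: C_def power2_eq_square)
  have P: "R n * C * R (n-1) = R (n-1) * R n" for n
  proof (induction n rule: int_induct[where k=1])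
    case base
    have "R 1 * C * R (1-1) = y * (x * y * inverse x * inverse y) * (y * x * inverse y)"
      using assms(5,6) by (simp add: C_def commC_def)
    also have "\<dots> = y * x" using assms(1,2) by (simp add: mult.assoc)
    also have "\<dots> = R (1-1) * R 1" using assms(2,5,6) by (simp add: mult.assoc)
    finally show ?case .
  next
    case (step1 i)
    have "R (i+1) * C * R i = R i * R (i+1)"
      apply (rule fwd[where a="R (i-1)" and D="C * R (i-1)"])
      using Cnz nz rec[of i] step1(2) by (auto simp: mult.assoc)
    then show ?case by simp
  next
    case (step2 i)
    have r: "R (i-1+1) * C * R (i-1-1) = R (i-1) * R (i-1) + 1" by (rule rec)
    have "R (i-1) * C * R (i-1-1) = R (i-1-1) * R (i-1)"
      apply (rule bwd[where c="R i"])
      using Cnz nz r step2(2) by auto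
    then show ?case by simp
  qed
  have K: "Kinv R n = Kinv R (n-1)" for n
  proof -
    have "Kinv R n = inverse (R (n+1)) * R n + inverse (R (n+1)) * inverse (R n)
             + R (n+1) * inverse (R n)" by (simp add: Kinv_def)
    also have "\<dots> = inverse (R n) * R (n-1) + inverse (R n) * inverse (R (n-1))
             + R n * inverse (R (n-1))"
      apply (rule kstep[where D="C * R (n-1)"])
      using nz Cnz rec[of n] P[of n] by (auto simp: mult.assoc)
    also have "\<dots> = Kinv R (n-1)" by (simp add: Kinv_def)
    finally show ?thesis .
  qed
  have "Kinv R n = Kinv R 0" for n
  proof (induction n rule: int_induct[where k=0])
    case base then show ?case by simp
  next
    case (step1 i) then show ?case using K[of "i+1"] by simp
  next
    case (step2 i) then show ?case using K[of i] by simp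
  qed
  then show ?thesis by (intro allI) (metis (no_types))
qed

end
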